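(* A planar structure's degrees of statical (and thus kinematical) in- or over-determinacy is invariant both under projective planar transformations and dualities.
   Context: Planar structures are considered in two settings. In the planar system, bodies in the $x,y$ plane are subjected to coplanar forces, represented as $f=(-F_y,F_x,M_z)\in\mathcal{F}_p$ (projective homogeneous coordinates of the line of action in the real projective plane $PG(2)$), and move in the plane with velocities $e=(-v_y,v_x,\omega_z)\in\mathcal{E}_c$ (homogeneous coordinates of the instantaneous centre of rotation). In the complementary planar system, bodies in the $x,y$ plane are subjected to forces orthogonal to the plane, $f=(-M_y,M_x,F_z)\in\mathcal{F}_c$ (homogeneous coordinates of the point of attack), and move with velocities $e=(-\omega_y,\omega_x,v_z)\in\mathcal{E}_p$ (homogeneous coordinates of the axis of rotation). A projective transformation (resp. duality) of a statics/kinematics problem transforms all points and lines of the structure and of the forces/velocities according to a projective transformation (resp. duality) of $PG(2)$, such that the image is in static equilibrium / compatible iff the original is. It has been established that: invertible linear maps $\mathcal{F}_p\to\mathcal{F}_p$, $\mathcal{F}_c\to\mathcal{F}_c$, $\mathcal{F}_p\leftrightarrow\mathcal{F}_c$ (forces $f_i\mapsto f_iA$) preserve static equilibrium, and invertible linear maps $\mathcal{E}_p\to\mathcal{E}_p$, $\mathcal{E}_c\to\mathcal{E}_c$, $\mathcal{E}_p\leftrightarrow\mathcal{E}_c$ preserve compatibility; every projective transformation (for maps within the same space) or duality (for maps between the $p$ and $c$ spaces) of a statics/kinematics problem is the composition of a scaling-equivalence class of such an invertible linear map with an equilibrium- (resp. compatibility-) preserving congruence (a nonzero rescaling $f_i\mapsto\psi_i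 f_i$ of the individual forces/velocities, which leaves their lines/points of attack unchanged), and every such composition gives one. Statical and kinematical degrees of indeterminacy are linked: to each kinematical degree of indeterminacy corresponds a degree of static overdeterminacy and vice versa. *)

theory Defs
  imports "HOL-Analysis.Analysis"
begin

text \<open>Bodies are indexed by a finite type 'b, force elements
(members, contacts, supports) by a finite type 'm.  Element j carries a force whose
projective homogeneous coordinates are the vector f j in R^3 (for the planar system
f = (-Fy, Fx, Mz), for the complementary system f = (-My, Mx, Fz)); its unknown
magnitude is the scalar lambda j.  The entry B$b$j is the coefficient with which
element j acts on body b (e.g. +1/-1 for the two bodies a member connects, 0 otherwise;
supports act on a single body).\<close>

definition equilibrium_map ::
  "real^'m^'b \<Rightarrow> ('m \<Rightarrow> real^3) \<Rightarrow> real^'m \<Rightarrow> real^3^'b" where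
  "equilibrium_map B f lam = (\<chi> b. \<Sum>j\<in>UNIV. (B$b$j * lam$j) *\<^sub>R f j)"

text \<open>Degree of statical indeterminacy: number of independent self-stress states.\<close>
definition stat_indet :: "real^'m^'b \<Rightarrow> ('m \<Rightarrow> real^3) \<Rightarrow> nat" where
  "stat_indet B f = dim {lam. equilibrium_map B f lam = 0}"

text \<open>Degree of statical overdeterminacy (= degree of kinematical indeterminacy):
number of independent load cases that cannot be equilibrated.\<close>
definition stat_overdet :: "real^'m^'b \<Rightarrow> ('m \<Rightarrow> real^3) \<Rightarrow> nat" where
  "stat_overdet B f = DIM(real^3^'b) - dim (range (equilibrium_map B f))"

text \<open>Projective transformation or duality of the statics problem: by the established
characterization, a composition of an invertible linear map f \<mapsto> f A (within F_p, within
F_c, or between F_p and F_c -- all identified with R^3 via homogeneous coordinates)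
with a congruence f_j \<mapsto> psi_j f_j, psi_j \<noteq> 0.  The incidence structure B is unchanged.\<close>
definition proj_transform_statics :: "('m \<Rightarrow> real^3) \<Rightarrow> ('m \<Rightarrow> real^3) \<Rightarrow> bool" where
  "proj_transform_statics f g \<longleftrightarrow>
     (\<exists>(A::real^3^3) psi. invertible A \<and> (\<forall>j. psi j \<noteq> (0::real)) \<and>
        (\<forall>j. g j = psi j *\<^sub>R (f j v* A)))"

end

theory Submission
  imports Defs
begin

lemma dim_img_inj:
  fixes T :: "'a::euclidean_space \<Rightarrow> 'c::euclidean_space"
  assumes "linear T" "inj T"
  shows "dim (T ` S) = dim S"
  using assms by (metis dim_image_eq inj_on_subset subset_UNIV)

theorem corollary1:
  fixes B :: "real^'m^'b" and f g :: "'m \<Rightarrow> real^3"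
  assumes "proj_transform_statics f g"
  shows "stat_indet B g = stat_indet B f \<and> stat_overdet B g = stat_overdet B f"
proof -
  obtain A :: "real^3^3" and psi where A: "invertible A" and psi: "\<forall>j. psi j \<noteq> (0::real)"
    and g: "\<forall>j. g j = psi j *\<^sub>R (f j v* A)"
    using assms unfolding proj_transform_statics_def by blast
  obtain Ai :: "real^3^3" where Ai: "A ** Ai = mat 1"
    using A unfolding invertible_def by blast
  define D :: "real^'m \<Rightarrow> real^'m" where "D lam = (\<chi> j. psi j * lam$j)" for lam
  define Di :: "real^'m \<Rightarrow> real^'m" where "Di lam = (\<chi> j. lam$j / psi j)" for lam
  define T :: "real^3^'b \<Rightarrow> real^3^'b" where "T y = (\<chi> b. y$b v* A)" for y
  have DDi: "D (Di x) = x" for x using psi by (simp add: D_def Di_def vec_eq_iff)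
  have DiD: "Di (D x) = x" for x using psi by (simp add: D_def Di_def vec_eq_iff)
  have linDi: "linear Di"
    by (rule linearI) (auto simp: Di_def vec_eq_iff add_divide_distrib)
  have injDi: "inj Di" by (metis DDi injI)
  have linT: "linear T"
    by (rule linearI) (auto simp: T_def vec_eq_iff vector_matrix_left_distrib scaleR_vector_matrix_assoc)
  have TT: "y v* A v* Ai = y" for y :: "real^3"
    by (simp add: vector_matrix_mul_assoc Ai)
  have injT: "inj T"
  proof (rule injI)
    fix x y assume "T x = T y"
    then have "\<forall>b. x$b v* A = y$b v* A" by (simp add: T_def vec_eq_iff)
    then have "\<forall>b. x$b = y$b" by (metis TT)
    then show "x = y" by (simp add: vec_eq_iff)
  qed
  have lin_vA: "linear (\<lambda>y::real^3. y v* A)"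
    by (rule linearI) (auto simp: vector_matrix_left_distrib scaleR_vector_matrix_assoc)
  have key: "equilibrium_map B g lam = T (equilibrium_map B f (D lam))" for lam
  proof -
    have "(\<Sum>j\<in>UNIV. (B$b$j * lam$j) *\<^sub>R g j) = (\<Sum>j\<in>UNIV. (B$b$j * (D lam)$j) *\<^sub>R f j) v* A" for b
    proof -
      have "(\<Sum>j\<in>UNIV. (B$b$j * (D lam)$j) *\<^sub>R f j) v* A = (\<Sum>j\<in>UNIV. ((B$b$j * (D lam)$j) *\<^sub>R f j) v* A)"
        using linear_sum[OF lin_vA] by blast
      also have "\<dots> = (\<Sum>j\<in>UNIV. (B$b$j * lam$j) *\<^sub>R g j)"
        using g by (intro sum.cong) (auto simp: D_def scaleR_vector_matrix_assoc mult_ac)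
      finally show ?thesis by simp
    qed
    then show ?thesis by (simp add: equilibrium_map_def T_def)
  qed
  have T0: "T x = 0 \<longleftrightarrow> x = 0" for x
    using injT linear_0[OF linT] by (metis injD)
  have ker: "{lam. equilibrium_map B g lam = 0} = Di ` {mu. equilibrium_map B f mu = 0}"
  proof (rule set_eqI, rule iffI)
    fix lam assume "lam \<in> {lam. equilibrium_map B g lam = 0}"
    then have "D lam \<in> {mu. equilibrium_map B f mu = 0}" by (simp add: key T0)
    then show "lam \<in> Di ` {mu. equilibrium_map B f mu = 0}" by (metis DiD image_eqI)
  next
    fix lam assume "lam \<in> Di ` {mu. equilibrium_map B f mu = 0}"
    then obtain mu where "equilibrium_map B f mu = 0" "lam = Di mu" by blast
    then show "lam \<in> {lam. equilibrium_map B g lam = 0}" by (simp add: key DDi T0 linear_0[OF linT])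
  qed
  have rng: "range (equilibrium_map B g) = T ` range (equilibrium_map B f)"
  proof (rule set_eqI, rule iffI)
    fix y assume "y \<in> range (equilibrium_map B g)"
    then show "y \<in> T ` range (equilibrium_map B f)" by (auto simp: key)
  next
    fix y assume "y \<in> T ` range (equilibrium_map B f)"
    then obtain mu where "y = T (equilibrium_map B f mu)" by blast
    then have "y = equilibrium_map B g (Di mu)" by (simp add: key DDi)
    then show "y \<in> range (equilibrium_map B g)" by blast
  qed
  show ?thesis
    unfolding stat_indet_def stat_overdet_def ker rng
    using dim_img_inj[OF linDi injDi] dim_img_inj[OF linT injT] by simp
qed

end
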